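(* Let $P$ be a program and let $\sigma$ be a sequence of events such that the Power automaton of $P$ reaches, from its initial state $q_0$ by reading $\sigma$, a final state $q$. Then $q$ is uniquely determined by $\sigma$.
   Context: Programs. Fix a finite set $D$ of values, which also serve as addresses, with $0\in D$, and a finite set $\mathit{Reg}$ of registers taking values in $D$. Expressions are built from constants in $D$, registers, and functions over $D\cup\{\bot\}$ that return $\bot$ iff some argument is $\bot$. Commands are loads $r\leftarrow \mathrm{mem}[e]$, stores $\mathrm{mem}[e]\leftarrow e'$, assignments $r\leftarrow e$, and $\mathrm{assume}(e)$. A thread is a finite automaton whose transitions (instructions) are labeled by commands; a program is a finite sequence of threads with ids $1,\dots,|P|$. Power automaton. A state consists of, for each thread $t$, a runtime state $(F,C,L)$ ($F$ the sequence of fetched instructions, $C$ the set of committed indices, $L$ mapping each index to $\bot$ or to the store read by the load there: an initial store $\mathrm{init}_a$ of value $0$ to $a$, or a pair $(t',i')$), and a storage state $(co,prop)$ ($co$ assigns rational coherence keys to committed stores, initial stores have key $0$; $prop(t,a)$ is the last store to $a$ propagated to $t$, initially $\mathrm{init}_a$); the initial state has nothing fetched. Register values for the $i$-th instruction of thread $t$ come from the latest earlier fetched assignment or load to the register ($0$ if none; a load gives $\bot$ if unsatisfied, $0$ if it read an initial store, else the value of the store read). Address/data dependencies are earlier instructions an address/value depends on via registers; control dependencies are earlier assumes. Transitions: (fetch) append an instruction of $T_t$ continuing from the last fetched one's target state, event $(\mathrm{fetch},t,\text{instr})$; (load from memory) load $i$ with $L[i]=\bot$ and address $a\ne\bot$: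 $L[i]:=prop(t,a)$, event $(\mathrm{load},t,i,a)$; (early read) same event, if the greatest $i'<i$ that is a store with address in $\{a,\bot\}$ has address $a$, known value and is uncommitted: $L[i]:=(t,i')$; (commit) uncommitted $i$ with committed address/data/control dependencies, address and value $\ne\bot$, all earlier instructions with the same or unknown address committed, $L[i]\ne\bot$ for loads, value $\ne0$ for assumes: event $(\mathrm{commit},t,i)$; for a store additionally a fresh key $k$ is set as $co(t,i)$, event $(\mathrm{commit},t,i,k,a)$, immediately followed by propagation to $t$; (propagate) committed store $(t',i')$ to $a$ with $co(prop(t,a))<co(t',i')$: $prop(t,a):=(t',i')$, event $(\mathrm{prop},t,t',i',a)$. Final states: all fetched instructions committed; for loads $i'<i$ of a thread to the same address, $co(L[i'])\le co(L[i])$; for a store $i'$ and later load $i$ of a thread to the same address, $co(t,i')\le co(L[i])$. *)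

theory Defs
  imports Complex_Main
begin

text \<open>Values/addresses: a finite type 'v with 0 (so D = UNIV).
  None plays the role of bottom.\<close>

datatype ('v,'r) expr = Const 'v | Reg 'r | App "'v list \<Rightarrow> 'v" "('v,'r) expr list"

fun eval :: "('r \<Rightarrow> 'v option) \<Rightarrow> ('v,'r) expr \<Rightarrow> 'v option" where
  "eval \<rho> (Const c) = Some c"
| "eval \<rho> (Reg r) = \<rho> r"
| "eval \<rho> (App f es) =
     (if (\<exists>e\<in>set es. eval \<rho> e = None) then None
      else Some (f (map (\<lambda>e. the (eval \<rho> e)) es)))"

fun regs :: "('v,'r) expr \<Rightarrow> 'r set" where
  "regs (Const c) = {}"
| "regs (Reg r) = {r}"
| "regs (App f es) = (\<Union>e\<in>set es. regs e)"

datatype ('v,'r) cmd =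
    Load 'r "('v,'r) expr"
  | Store "('v,'r) expr" "('v,'r) expr"
  | Assign 'r "('v,'r) expr"
  | Assume "('v,'r) expr"

text \<open>An instruction is a transition (source state, command, target state) of a thread automaton.\<close>
type_synonym ('q,'v,'r) instr = "'q \<times> ('v,'r) cmd \<times> 'q"

record ('q,'v,'r) thread =
  tinit :: 'q
  ttrans :: "('q,'v,'r) instr set"

text \<open>A program is a list of threads; thread ids are 1, ..., length P.\<close>
type_synonym ('q,'v,'r) program = "('q,'v,'r) thread list"

definition tid :: "('q,'v,'r) program \<Rightarrow> nat \<Rightarrow> bool" where
  "tid P t \<longleftrightarrow> 1 \<le> t \<and> t \<le> length P"

definition thr :: "('q,'v,'r) program \<Rightarrow> nat \<Rightarrow> ('q,'v,'r) thread" where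
  "thr P t = P ! (t - 1)"

text \<open>Stores: initial store of an address, or the store at index i of thread t.\<close>
datatype 'v store = Init 'v | St nat nat

text \<open>Runtime state (F, C, L); indices of fetched instructions are 0-based positions in F.\<close>
record ('q,'v,'r) rstate =
  fetched :: "('q,'v,'r) instr list"
  committed :: "nat set"
  lrd :: "nat \<Rightarrow> 'v store option"

text \<open>Power state: runtime state per thread, global storage state (co, prop).
  co is defined exactly on committed stores (t,i).\<close>
record ('q,'v,'r) pstate =
  rt :: "nat \<Rightarrow> ('q,'v,'r) rstate"
  co :: "nat \<times> nat \<Rightarrow> rat option"
  prp :: "nat \<Rightarrow> 'v \<Rightarrow> 'v store"

datatype ('q,'v,'r) event =
    EvFetch nat "('q,'v,'r) instr"
  | EvLoad nat nat 'v
  | EvCommit nat nat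
  | EvCommitSt nat nat rat 'v
  | EvProp nat nat nat 'v

definition init_state :: "('q,'v::zero,'r) pstate" where
  "init_state = \<lparr> rt = (\<lambda>t. \<lparr> fetched = [], committed = {}, lrd = (\<lambda>i. None) \<rparr>),
                  co = (\<lambda>x. None), prp = (\<lambda>t a. Init a) \<rparr>"

definition nf :: "('q,'v,'r) pstate \<Rightarrow> nat \<Rightarrow> nat" where
  "nf S t = length (fetched (rt S t))"

definition cmdAt :: "('q,'v,'r) pstate \<Rightarrow> nat \<Rightarrow> nat \<Rightarrow> ('v,'r) cmd" where
  "cmdAt S t i = fst (snd (fetched (rt S t) ! i))"

fun defreg :: "('v,'r) cmd \<Rightarrow> 'r option" where
  "defreg (Load r e) = Some r"
| "defreg (Assign r e) = Some r"
| "defreg _ = None"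

fun is_load :: "('v,'r) cmd \<Rightarrow> bool" where
  "is_load (Load r e) = True" | "is_load _ = False"
fun is_store :: "('v,'r) cmd \<Rightarrow> bool" where
  "is_store (Store e d) = True" | "is_store _ = False"
fun is_assume :: "('v,'r) cmd \<Rightarrow> bool" where
  "is_assume (Assume e) = True" | "is_assume _ = False"

definition is_mem :: "('v,'r) cmd \<Rightarrow> bool" where
  "is_mem c \<longleftrightarrow> is_load c \<or> is_store c"

fun addrExp :: "('v,'r) cmd \<Rightarrow> ('v,'r) expr option" where
  "addrExp (Load r e) = Some e"
| "addrExp (Store e d) = Some e"
| "addrExp _ = None"

fun valExp :: "('v,'r) cmd \<Rightarrow> ('v,'r) expr option" where
  "valExp (Store e d) = Some d"
| "valExp (Assign r e) = Some e"
| "valExp (Assume e) = Some e"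
| "valExp (Load r e) = None"

definition has_def :: "('q,'v,'r) pstate \<Rightarrow> nat \<Rightarrow> nat \<Rightarrow> 'r \<Rightarrow> bool" where
  "has_def S t i r \<longleftrightarrow> (\<exists>j<i. defreg (cmdAt S t j) = Some r)"

definition lastdef :: "('q,'v,'r) pstate \<Rightarrow> nat \<Rightarrow> nat \<Rightarrow> 'r \<Rightarrow> nat" where
  "lastdef S t i r = (GREATEST j. j < i \<and> defreg (cmdAt S t j) = Some r)"

inductive regv :: "('q,'v::zero,'r) pstate \<Rightarrow> nat \<Rightarrow> nat \<Rightarrow> 'r \<Rightarrow> 'v option \<Rightarrow> bool"
  for S where
  rv_none: "\<not> has_def S t i r \<Longrightarrow> regv S t i r (Some 0)"
| rv_assign: "\<lbrakk> has_def S t i r; lastdef S t i r = j; cmdAt S t j = Assign r e;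
      \<forall>r'\<in>regs e. regv S t j r' (\<rho> r') \<rbrakk> \<Longrightarrow> regv S t i r (eval \<rho> e)"
| rv_load_unsat: "\<lbrakk> has_def S t i r; lastdef S t i r = j; cmdAt S t j = Load r e;
      lrd (rt S t) j = None \<rbrakk> \<Longrightarrow> regv S t i r None"
| rv_load_init: "\<lbrakk> has_def S t i r; lastdef S t i r = j; cmdAt S t j = Load r e;
      lrd (rt S t) j = Some (Init a) \<rbrakk> \<Longrightarrow> regv S t i r (Some 0)"
| rv_load_st: "\<lbrakk> has_def S t i r; lastdef S t i r = j; cmdAt S t j = Load r e;
      lrd (rt S t) j = Some (St t' i'); i' < nf S t'; cmdAt S t' i' = Store ea ed;
      \<forall>r'\<in>regs ed. regv S t' i' r' (\<rho> r') \<rbrakk> \<Longrightarrow> regv S t i r (eval \<rho> ed)"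

definition rval :: "('q,'v::zero,'r) pstate \<Rightarrow> nat \<Rightarrow> nat \<Rightarrow> 'r \<Rightarrow> 'v option" where
  "rval S t i r = (if \<exists>v. regv S t i r v then THE v. regv S t i r v else None)"

definition addrOf :: "('q,'v::zero,'r) pstate \<Rightarrow> nat \<Rightarrow> nat \<Rightarrow> 'v option" where
  "addrOf S t i = (case addrExp (cmdAt S t i) of Some e \<Rightarrow> eval (rval S t i) e | None \<Rightarrow> None)"

definition valOf :: "('q,'v::zero,'r) pstate \<Rightarrow> nat \<Rightarrow> nat \<Rightarrow> 'v option" where
  "valOf S t i = (case valExp (cmdAt S t i) of Some e \<Rightarrow> eval (rval S t i) e | None \<Rightarrow> None)"

definition addr_deps :: "('q,'v,'r) pstate \<Rightarrow> nat \<Rightarrow> nat \<Rightarrow> nat set" where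
  "addr_deps S t i = {lastdef S t i r | r e. addrExp (cmdAt S t i) = Some e \<and> r \<in> regs e \<and> has_def S t i r}"

definition data_deps :: "('q,'v,'r) pstate \<Rightarrow> nat \<Rightarrow> nat \<Rightarrow> nat set" where
  "data_deps S t i = {lastdef S t i r | r e. valExp (cmdAt S t i) = Some e \<and> r \<in> regs e \<and> has_def S t i r}"

definition ctrl_deps :: "('q,'v,'r) pstate \<Rightarrow> nat \<Rightarrow> nat \<Rightarrow> nat set" where
  "ctrl_deps S t i = {j. j < i \<and> is_assume (cmdAt S t j)}"

fun key :: "('q,'v,'r) pstate \<Rightarrow> 'v store \<Rightarrow> rat option" where
  "key S (Init a) = Some 0"
| "key S (St t i) = co S (t, i)"

definition kv :: "('q,'v,'r) pstate \<Rightarrow> 'v store \<Rightarrow> rat" where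
  "kv S s = (case key S s of Some k \<Rightarrow> k | None \<Rightarrow> 0)"

definition can_commit :: "('q,'v::zero,'r) pstate \<Rightarrow> nat \<Rightarrow> nat \<Rightarrow> bool" where
  "can_commit S t i \<longleftrightarrow>
     i < nf S t \<and> i \<notin> committed (rt S t) \<and>
     addr_deps S t i \<union> data_deps S t i \<union> ctrl_deps S t i \<subseteq> committed (rt S t) \<and>
     (addrExp (cmdAt S t i) \<noteq> None \<longrightarrow> addrOf S t i \<noteq> None) \<and>
     (valExp (cmdAt S t i) \<noteq> None \<longrightarrow> valOf S t i \<noteq> None) \<and>
     (is_mem (cmdAt S t i) \<longrightarrow>
        (\<forall>j<i. is_mem (cmdAt S t j) \<and> (addrOf S t j = None \<or> addrOf S t j = addrOf S t i)
               \<longrightarrow> j \<in> committed (rt S t))) \<and>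
     (is_load (cmdAt S t i) \<longrightarrow> lrd (rt S t) i \<noteq> None) \<and>
     (is_assume (cmdAt S t i) \<longrightarrow> valOf S t i \<noteq> Some 0)"

definition setL :: "('q,'v,'r) pstate \<Rightarrow> nat \<Rightarrow> nat \<Rightarrow> 'v store \<Rightarrow> ('q,'v,'r) pstate" where
  "setL S t i s = S\<lparr> rt := (rt S)(t := (rt S t)\<lparr> lrd := (lrd (rt S t))(i := Some s) \<rparr>) \<rparr>"

definition setC :: "('q,'v,'r) pstate \<Rightarrow> nat \<Rightarrow> nat \<Rightarrow> ('q,'v,'r) pstate" where
  "setC S t i = S\<lparr> rt := (rt S)(t := (rt S t)\<lparr> committed := insert i (committed (rt S t)) \<rparr>) \<rparr>"

definition setProp :: "('q,'v,'r) pstate \<Rightarrow> nat \<Rightarrow> 'v \<Rightarrow> 'v store \<Rightarrow> ('q,'v,'r) pstate" where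
  "setProp S t a s = S\<lparr> prp := (prp S)(t := (prp S t)(a := s)) \<rparr>"

inductive pstep :: "('q,'v::zero,'r) program \<Rightarrow> ('q,'v,'r) pstate \<Rightarrow> ('q,'v,'r) event list
                      \<Rightarrow> ('q,'v,'r) pstate \<Rightarrow> bool" for P where
  fetch: "\<lbrakk> tid P t; ins \<in> ttrans (thr P t);
      fst ins = (if fetched (rt S t) = [] then tinit (thr P t)
                 else snd (snd (last (fetched (rt S t))))) \<rbrakk>
    \<Longrightarrow> pstep P S [EvFetch t ins]
          (S\<lparr> rt := (rt S)(t := (rt S t)\<lparr> fetched := fetched (rt S t) @ [ins] \<rparr>) \<rparr>)"
| load_mem: "\<lbrakk> tid P t; i < nf S t; is_load (cmdAt S t i); lrd (rt S t) i = None;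
      addrOf S t i = Some a \<rbrakk>
    \<Longrightarrow> pstep P S [EvLoad t i a] (setL S t i (prp S t a))"
| early_read: "\<lbrakk> tid P t; i < nf S t; is_load (cmdAt S t i); lrd (rt S t) i = None;
      addrOf S t i = Some a;
      \<exists>j<i. is_store (cmdAt S t j) \<and> addrOf S t j \<in> {Some a, None};
      i' = (GREATEST j. j < i \<and> is_store (cmdAt S t j) \<and> addrOf S t j \<in> {Some a, None});
      addrOf S t i' = Some a; valOf S t i' \<noteq> None; i' \<notin> committed (rt S t) \<rbrakk>
    \<Longrightarrow> pstep P S [EvLoad t i a] (setL S t i (St t i'))"
| commit: "\<lbrakk> tid P t; can_commit S t i; \<not> is_store (cmdAt S t i) \<rbrakk>
    \<Longrightarrow> pstep P S [EvCommit t i] (setC S t i)"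
| commit_store: "\<lbrakk> tid P t; can_commit S t i; is_store (cmdAt S t i); addrOf S t i = Some a;
      k \<notin> ran (co S); k \<noteq> 0; kv S (prp S t a) < k \<rbrakk>
    \<Longrightarrow> pstep P S [EvCommitSt t i k a, EvProp t t i a]
          (setProp ((setC S t i)\<lparr> co := (co S)((t, i) := Some k) \<rparr>) t a (St t i))"
| propagate: "\<lbrakk> tid P t; tid P t'; i' \<in> committed (rt S t'); i' < nf S t';
      is_store (cmdAt S t' i'); addrOf S t' i' = Some a; co S (t', i') = Some k;
      kv S (prp S t a) < k \<rbrakk>
    \<Longrightarrow> pstep P S [EvProp t t' i' a] (setProp S t a (St t' i'))"

inductive reach :: "('q,'v::zero,'r) program \<Rightarrow> ('q,'v,'r) pstate \<Rightarrow> ('q,'v,'r) event list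
                      \<Rightarrow> ('q,'v,'r) pstate \<Rightarrow> bool" for P where
  reach_refl: "reach P S [] S"
| reach_step: "\<lbrakk> pstep P S e S'; reach P S' \<sigma> S'' \<rbrakk> \<Longrightarrow> reach P S (e @ \<sigma>) S''"

definition final :: "('q,'v::zero,'r) program \<Rightarrow> ('q,'v,'r) pstate \<Rightarrow> bool" where
  "final P S \<longleftrightarrow> (\<forall>t. tid P t \<longrightarrow>
     (\<forall>i<nf S t. i \<in> committed (rt S t)) \<and>
     (\<forall>i' i. i' < i \<and> i < nf S t \<and> is_load (cmdAt S t i') \<and> is_load (cmdAt S t i) \<and>
        addrOf S t i' = addrOf S t i
        \<longrightarrow> kv S (the (lrd (rt S t) i')) \<le> kv S (the (lrd (rt S t) i))) \<and>
     (\<forall>i' i. i' < i \<and> i < nf S t \<and> is_store (cmdAt S t i') \<and> is_load (cmdAt S t i) \<and>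
        addrOf S t i' = addrOf S t i
        \<longrightarrow> kv S (St t i') \<le> kv S (the (lrd (rt S t) i))))"

end

theory Submission
  imports Defs
begin

lemma eval_cong: "(\<forall>r\<in>regs e. \<rho> r = \<rho>' r) \<Longrightarrow> eval \<rho> e = eval \<rho>' e"
proof (induction e)
  case (App f es)
  then have "\<forall>x\<in>set es. eval \<rho> x = eval \<rho>' x" by auto
  then show ?case by (auto cong: map_cong)
qed auto

lemma eval_some: "eval \<rho> e \<noteq> None \<Longrightarrow> r \<in> regs e \<Longrightarrow> \<rho> r \<noteq> None"
proof (induction e)
  case (App f es)
  then show ?case by (auto split: if_splits)
qed auto

lemma regv_fun: "regv S t i r v \<Longrightarrow> regv S t i r w \<Longrightarrow> v = w"
proof (induction arbitrary: w rule: regv.induct)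
  case (rv_none t i r)
  from rv_none.prems show ?case by cases (use rv_none.hyps in auto)
next
  case (rv_assign t i r j e \<rho>)
  from rv_assign.prems show ?case
  proof cases
    case (rv_assign j' e' \<rho>')
    then have "\<forall>r'\<in>regs e. \<rho> r' = \<rho>' r'" using rv_assign.IH \<open>lastdef S t i r = j\<close> \<open>cmdAt S t j = Assign r e\<close> by auto
    then show ?thesis using rv_assign.hyps local.rv_assign by (auto intro: eval_cong)
  qed (use rv_assign.hyps in auto)
next
  case (rv_load_unsat t i r j e)
  from rv_load_unsat.prems show ?case by cases (use rv_load_unsat.hyps in auto)
next
  case (rv_load_init t i r j e a)
  from rv_load_init.prems show ?case by cases (use rv_load_init.hyps in auto)
next
  case (rv_load_st t i r j e t' i' ea ed \<rho>)
  from rv_load_st.prems show ?case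
  proof cases
    case (rv_load_st j2 e2 t2 i2 ea2 ed2 \<rho>')
    then have "\<forall>r'\<in>regs ed. \<rho> r' = \<rho>' r'" using rv_load_st.IH rv_load_st.hyps by auto
    then show ?thesis using rv_load_st.hyps local.rv_load_st by (auto intro: eval_cong)
  qed (use rv_load_st.hyps in auto)
qed

definition extd :: "('q,'v,'r) pstate \<Rightarrow> ('q,'v,'r) pstate \<Rightarrow> bool" where
 "extd S S' \<longleftrightarrow> (\<forall>t. \<exists>xs. fetched (rt S' t) = fetched (rt S t) @ xs) \<and>
    (\<forall>t j v. lrd (rt S t) j = Some v \<longrightarrow> lrd (rt S' t) j = Some v) \<and>
    (\<forall>t. committed (rt S t) \<subseteq> committed (rt S' t)) \<and> co S \<subseteq>\<^sub>m co S'"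

lemma extd_refl: "extd S S" by (auto simp: extd_def)

lemma extd_trans: "extd S1 S2 \<Longrightarrow> extd S2 S3 \<Longrightarrow> extd S1 S3"
proof -
  assume a: "extd S1 S2" "extd S2 S3"
  have "\<exists>xs. fetched (rt S3 t) = fetched (rt S1 t) @ xs" for t
  proof -
    obtain xs ys where "fetched (rt S2 t) = fetched (rt S1 t) @ xs" "fetched (rt S3 t) = fetched (rt S2 t) @ ys"
      using a unfolding extd_def by blast
    then show ?thesis by simp
  qed
  moreover have "co S1 \<subseteq>\<^sub>m co S3" using a unfolding extd_def using map_le_trans by blast
  ultimately show ?thesis using a unfolding extd_def by blast
qed

lemma extd_nf: "extd S S' \<Longrightarrow> nf S t \<le> nf S' t"
proof -
  assume "extd S S'"
  then obtain xs where "fetched (rt S' t) = fetched (rt S t) @ xs" unfolding extd_def by blast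
  then show ?thesis unfolding nf_def by simp
qed

lemma extd_cmdAt: "extd S S' \<Longrightarrow> j < nf S t \<Longrightarrow> cmdAt S' t j = cmdAt S t j"
proof -
  assume "extd S S'" "j < nf S t"
  moreover obtain xs where "fetched (rt S' t) = fetched (rt S t) @ xs" using \<open>extd S S'\<close> unfolding extd_def by blast
  ultimately show ?thesis unfolding nf_def cmdAt_def by (simp add: nth_append)
qed

lemma extd_cmdAt_all: "extd S S' \<Longrightarrow> i \<le> nf S t \<Longrightarrow> \<forall>j<i. cmdAt S' t j = cmdAt S t j"
  using extd_cmdAt by fastforce

lemma extd_has_def: "extd S S' \<Longrightarrow> i \<le> nf S t \<Longrightarrow> has_def S' t i r = has_def S t i r"
proof -
  assume a: "extd S S'" "i \<le> nf S t"
  then have "\<forall>j<i. cmdAt S' t j = cmdAt S t j" by (rule extd_cmdAt_all)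
  then show ?thesis unfolding has_def_def by auto
qed

lemma extd_lastdef: "extd S S' \<Longrightarrow> i \<le> nf S t \<Longrightarrow> lastdef S' t i r = lastdef S t i r"
proof -
  assume a: "extd S S'" "i \<le> nf S t"
  then have c: "\<forall>j<i. cmdAt S' t j = cmdAt S t j" by (rule extd_cmdAt_all)
  have "(\<lambda>j. j < i \<and> defreg (cmdAt S' t j) = Some r) = (\<lambda>j. j < i \<and> defreg (cmdAt S t j) = Some r)"
    using c by auto
  then show ?thesis unfolding lastdef_def by simp
qed

lemma lastdef_lt: "has_def S t i r \<Longrightarrow> lastdef S t i r < i"
proof -
  assume "has_def S t i r"
  then obtain j where "j < i \<and> defreg (cmdAt S t j) = Some r" unfolding has_def_def by blast
  then have "(GREATEST j. j < i \<and> defreg (cmdAt S t j) = Some r) < i \<and> defreg (cmdAt S t (GREATEST j. j < i \<and> defreg (cmdAt S t j) = Some r)) = Some r"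
    by (rule GreatestI_nat[where b = i]) auto
  then show ?thesis unfolding lastdef_def by simp
qed

lemma extd_lrd: "extd S S' \<Longrightarrow> lrd (rt S t) j = Some v \<Longrightarrow> lrd (rt S' t) j = Some v"
  unfolding extd_def by blast

lemma regv_mono: "regv S t i r w \<Longrightarrow> extd S S' \<Longrightarrow> w \<noteq> None \<Longrightarrow> i \<le> nf S t \<Longrightarrow> regv S' t i r w"
proof (induction rule: regv.induct)
  case (rv_none t i r)
  then have "\<not> has_def S' t i r" using extd_has_def[OF rv_none.prems(1) rv_none.prems(3)] by simp
  then show ?case by (rule regv.rv_none)
next
  case (rv_assign t i r j e \<rho>)
  have j: "j < i" using rv_assign.hyps lastdef_lt[of S t i r] by simp
  have "\<forall>r'\<in>regs e. regv S' t j r' (\<rho> r')"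
  proof
    fix r' assume r': "r' \<in> regs e"
    have "\<rho> r' \<noteq> None" by (rule eval_some[OF rv_assign.prems(2) r'])
    then show "regv S' t j r' (\<rho> r')" using rv_assign.IH r' rv_assign.prems j by simp
  qed
  moreover have "cmdAt S' t j = Assign r e" using extd_cmdAt[OF rv_assign.prems(1), of j t] rv_assign.hyps rv_assign.prems j by simp
  moreover have "has_def S' t i r" "lastdef S' t i r = j"
    using rv_assign.hyps extd_has_def[OF rv_assign.prems(1) rv_assign.prems(3), of r] extd_lastdef[OF rv_assign.prems(1) rv_assign.prems(3), of r] by simp_all
  ultimately show ?case by (intro regv.rv_assign)
next
  case (rv_load_unsat t i r j e)
  then show ?case by simp
next
  case (rv_load_init t i r j e a)
  have j: "j < i" using rv_load_init.hyps lastdef_lt[of S t i r] by simp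
  have "cmdAt S' t j = Load r e" using extd_cmdAt[OF rv_load_init.prems(1), of j t] rv_load_init.hyps rv_load_init.prems j by simp
  moreover have "has_def S' t i r" "lastdef S' t i r = j"
    using rv_load_init.hyps extd_has_def[OF rv_load_init.prems(1) rv_load_init.prems(3), of r] extd_lastdef[OF rv_load_init.prems(1) rv_load_init.prems(3), of r] by simp_all
  moreover have "lrd (rt S' t) j = Some (Init a)" using extd_lrd[OF rv_load_init.prems(1)] rv_load_init.hyps by blast
  ultimately show ?case by (intro regv.rv_load_init)
next
  case (rv_load_st t i r j e t' i' ea ed \<rho>)
  have j: "j < i" using rv_load_st.hyps lastdef_lt[of S t i r] by simp
  have "\<forall>r'\<in>regs ed. regv S' t' i' r' (\<rho> r')"
  proof
    fix r' assume r': "r' \<in> regs ed"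
    have "\<rho> r' \<noteq> None" by (rule eval_some[OF rv_load_st.prems(2) r'])
    then show "regv S' t' i' r' (\<rho> r')" using rv_load_st.IH r' rv_load_st.prems rv_load_st.hyps by simp
  qed
  moreover have "cmdAt S' t j = Load r e" using extd_cmdAt[OF rv_load_st.prems(1), of j t] rv_load_st.hyps rv_load_st.prems j by simp
  moreover have "cmdAt S' t' i' = Store ea ed" using extd_cmdAt[OF rv_load_st.prems(1), of i' t'] rv_load_st.hyps by simp
  moreover have "i' < nf S' t'" using extd_nf[OF rv_load_st.prems(1), of t'] rv_load_st.hyps by simp
  moreover have "has_def S' t i r" "lastdef S' t i r = j"
    using rv_load_st.hyps extd_has_def[OF rv_load_st.prems(1) rv_load_st.prems(3), of r] extd_lastdef[OF rv_load_st.prems(1) rv_load_st.prems(3), of r] by simp_all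
  moreover have "lrd (rt S' t) j = Some (St t' i')" using extd_lrd[OF rv_load_st.prems(1)] rv_load_st.hyps by blast
  ultimately show ?case by (intro regv.rv_load_st)
qed

lemma rval_some: "rval S t i r = Some v \<Longrightarrow> regv S t i r (Some v)"
proof -
  assume a: "rval S t i r = Some v"
  then have ex: "\<exists>v. regv S t i r v" unfolding rval_def by (auto split: if_splits)
  then obtain w where w: "regv S t i r w" by blast
  have "(THE v. regv S t i r v) = w" by (rule the_equality[where P="regv S t i r"], rule w, erule regv_fun[OF _ w])
  then show ?thesis using a ex w unfolding rval_def by simp
qed

lemma regv_rval: "regv S t i r v \<Longrightarrow> rval S t i r = v"
proof -
  assume w: "regv S t i r v"
  have "(THE v. regv S t i r v) = v" by (rule the_equality[where P="regv S t i r"], rule w, erule regv_fun[OF _ w])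
  then show ?thesis using w unfolding rval_def by auto
qed

lemma rval_mono: "rval S t i r = Some v \<Longrightarrow> extd S S' \<Longrightarrow> i \<le> nf S t \<Longrightarrow> rval S' t i r = Some v"
proof -
  assume a: "rval S t i r = Some v" "extd S S'" "i \<le> nf S t"
  have "regv S' t i r (Some v)" by (rule regv_mono[OF rval_some[OF a(1)] a(2) _ a(3)]) simp
  then show ?thesis by (rule regv_rval)
qed

lemma addrOf_mono: "addrOf S t i = Some a \<Longrightarrow> extd S S' \<Longrightarrow> i < nf S t \<Longrightarrow> addrOf S' t i = Some a"
proof -
  assume a: "addrOf S t i = Some a" "extd S S'" "i < nf S t"
  obtain e where e: "addrExp (cmdAt S t i) = Some e" "eval (rval S t i) e = Some a"
    using a(1) unfolding addrOf_def by (auto split: option.splits)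
  have "\<forall>r\<in>regs e. rval S' t i r = rval S t i r"
  proof
    fix r assume "r \<in> regs e"
    then obtain v where "rval S t i r = Some v" using e(2) eval_some by fastforce
    then show "rval S' t i r = rval S t i r" using rval_mono a(2,3) by fastforce
  qed
  then have "eval (rval S' t i) e = Some a" using e(2) eval_cong by metis
  then show ?thesis using e(1) extd_cmdAt[OF a(2) a(3)] unfolding addrOf_def by simp
qed

definition Inv :: "('q,'v,'r) pstate \<Rightarrow> bool" where
  "Inv S \<longleftrightarrow> (\<forall>t a. key S (prp S t a) \<noteq> None) \<and> (\<forall>t i. co S (t,i) \<noteq> None \<longrightarrow> i \<in> committed (rt S t))"

lemma Inv_init: "Inv (init_state :: ('q,'v::zero,'r) pstate)"
  unfolding Inv_def init_state_def by simp

lemma key_upd_rt[simp]: "key (S\<lparr>rt := x\<rparr>) s = key S s" by (cases s) auto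
lemma key_upd_prp[simp]: "key (S\<lparr>prp := x\<rparr>) s = key S s" by (cases s) auto
lemma key_upd_co[simp]: "key (S\<lparr>co := c\<rparr>) s = (case s of Init a \<Rightarrow> Some 0 | St t i \<Rightarrow> c (t,i))" by (cases s) auto
lemma kv_upd_rt[simp]: "kv (S\<lparr>rt := x\<rparr>) s = kv S s" by (simp add: kv_def)
lemma kv_upd_prp[simp]: "kv (S\<lparr>prp := x\<rparr>) s = kv S s" by (simp add: kv_def)

lemma key_mono: "co S \<subseteq>\<^sub>m co S' \<Longrightarrow> key S s = Some k \<Longrightarrow> key S' s = Some k"
  by (cases s) (auto simp: map_le_def dom_def)

lemma kv_mono: "co S \<subseteq>\<^sub>m co S' \<Longrightarrow> key S s \<noteq> None \<Longrightarrow> kv S' s = kv S s"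
  using key_mono unfolding kv_def by fastforce

lemma extd_co: "extd S S' \<Longrightarrow> co S \<subseteq>\<^sub>m co S'"
  unfolding extd_def by blast

lemma extd_committed: "extd S S' \<Longrightarrow> i \<in> committed (rt S t) \<Longrightarrow> i \<in> committed (rt S' t)"
  unfolding extd_def by blast

lemma step_ext: "pstep P S e S' \<Longrightarrow> Inv S \<Longrightarrow> extd S S' \<and> Inv S'"
proof (induction rule: pstep.induct)
  case (fetch t ins S)
  then show ?case unfolding extd_def Inv_def by auto
next
  case (load_mem t i S a)
  then show ?case unfolding extd_def Inv_def setL_def by auto
next
  case (early_read t i S a i')
  then show ?case unfolding extd_def Inv_def setL_def by auto
next
  case (commit t S i)
  then show ?case unfolding extd_def Inv_def setC_def by auto
next
  case (commit_store t S i a k)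
  have n: "co S (t,i) = None" using commit_store unfolding Inv_def can_commit_def by blast
  have le: "co S \<subseteq>\<^sub>m (co S)((t, i) \<mapsto> k)" using n by (auto simp: map_le_def)
  have "key (setProp ((setC S t i)\<lparr>co := (co S)((t, i) \<mapsto> k)\<rparr>) t a (St t i)) s \<noteq> None"
    if "key S s \<noteq> None \<or> s = St t i" for s
    using that by (cases s) (auto simp: setProp_def setC_def)
  moreover have "key S (prp S t' a') \<noteq> None" for t' a' using commit_store.prems unfolding Inv_def by blast
  ultimately have "\<forall>t' a'. key (setProp ((setC S t i)\<lparr>co := (co S)((t, i) \<mapsto> k)\<rparr>) t a (St t i))
     (prp (setProp ((setC S t i)\<lparr>co := (co S)((t, i) \<mapsto> k)\<rparr>) t a (St t i)) t' a') \<noteq> None"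
    by (auto simp: setProp_def setC_def)
  then show ?case using commit_store.prems le unfolding extd_def Inv_def
    by (auto simp: setProp_def setC_def)
next
  case (propagate t t' i' S a k)
  have "key S (prp S t2 a2) \<noteq> None" for t2 a2 using propagate.prems unfolding Inv_def by blast
  then have "\<forall>t2 a2. key (setProp S t a (St t' i')) (prp (setProp S t a (St t' i')) t2 a2) \<noteq> None"
    using propagate.hyps by (auto simp: setProp_def)
  then show ?case using propagate.prems unfolding extd_def Inv_def by (auto simp: setProp_def)
qed

lemma reach_ext: "reach P S \<sigma> q \<Longrightarrow> Inv S \<Longrightarrow> extd S q \<and> Inv q"
proof (induction rule: reach.induct)
  case (reach_refl S)
  then show ?case using extd_refl by blast
next
  case (reach_step S e S' \<sigma> S'')
  then show ?case using step_ext extd_trans by blast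
qed

lemma step_prp: "pstep P S e S' \<Longrightarrow> Inv S \<Longrightarrow> kv S (prp S t0 a0) \<le> kv S' (prp S' t0 a0)"
proof (induction rule: pstep.induct)
  case (fetch t ins S)
  then show ?case by (simp add: kv_def)
next
  case (load_mem t i S a)
  then show ?case by (simp add: kv_def setL_def)
next
  case (early_read t i S a i')
  then show ?case by (simp add: kv_def setL_def)
next
  case (commit t S i)
  then show ?case by (simp add: kv_def setC_def)
next
  case (commit_store t S i a k)
  let ?S' = "setProp ((setC S t i)\<lparr>co := (co S)((t, i) \<mapsto> k)\<rparr>) t a (St t i)"
  have ex: "extd S ?S'" using step_ext[OF pstep.commit_store[OF commit_store.hyps] commit_store.prems] by blast
  show ?case
  proof (cases "t0 = t \<and> a0 = a")
    case True
    then show ?thesis using commit_store.hyps by (simp add: kv_def setProp_def setC_def)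
  next
    case False
    then have "prp ?S' t0 a0 = prp S t0 a0" by (auto simp: setProp_def setC_def)
    moreover have "key S (prp S t0 a0) \<noteq> None" using commit_store.prems unfolding Inv_def by blast
    ultimately show ?thesis using kv_mono[OF extd_co[OF ex]] by simp
  qed
next
  case (propagate t t' i' S a k)
  let ?S' = "setProp S t a (St t' i')"
  show ?case
  proof (cases "t0 = t \<and> a0 = a")
    case True
    then show ?thesis using propagate.hyps by (simp add: kv_def setProp_def)
  next
    case False
    then show ?thesis by (auto simp: setProp_def kv_def)
  qed
qed

lemma step_commit: "pstep P S e S' \<Longrightarrow> Inv S \<Longrightarrow> i \<notin> committed (rt S t) \<Longrightarrow> i \<in> committed (rt S' t)
  \<Longrightarrow> is_store (cmdAt S t i) \<Longrightarrow> addrOf S t i = Some a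
  \<Longrightarrow> kv S (prp S t a) < kv S' (St t i) \<and> key S' (St t i) \<noteq> None"
proof (induction rule: pstep.induct)
  case (fetch t0 ins S)
  then show ?case by (auto split: if_splits)
next
  case (load_mem t0 i0 S a0)
  then show ?case by (auto simp: setL_def split: if_splits)
next
  case (early_read t0 i0 S a0 i')
  then show ?case by (auto simp: setL_def split: if_splits)
next
  case (commit t0 S i0)
  then show ?case by (auto simp: setC_def split: if_splits)
next
  case (commit_store t0 S i0 a0 k)
  then have "t0 = t" "i0 = i" by (auto simp: setProp_def setC_def split: if_splits)
  then show ?case using commit_store by (auto simp: setProp_def setC_def kv_def)
next
  case (propagate t0 t' i' S a0 k)
  then show ?case by (auto simp: setProp_def)
qed

lemma reach_commit: "reach P R \<sigma> q \<Longrightarrow> Inv R \<Longrightarrow> i \<notin> committed (rt R t) \<Longrightarrow> i \<in> committed (rt q t)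
  \<Longrightarrow> i < nf R t \<Longrightarrow> is_store (cmdAt R t i) \<Longrightarrow> addrOf R t i = Some a
  \<Longrightarrow> kv R (prp R t a) < kv q (St t i)"
proof (induction rule: reach.induct)
  case (reach_refl S)
  then show ?case by simp
next
  case (reach_step R e R' \<sigma> q)
  have ex: "extd R R'" and inv: "Inv R'" using step_ext[OF reach_step.hyps(1) reach_step.prems(1)] by auto
  have exq: "extd R' q" using reach_ext[OF reach_step.hyps(2) inv] by blast
  show ?case
  proof (cases "i \<in> committed (rt R' t)")
    case True
    then have c: "kv R (prp R t a) < kv R' (St t i)" "key R' (St t i) \<noteq> None"
      using step_commit[OF reach_step.hyps(1) reach_step.prems(1,2) True reach_step.prems(5,6)] by auto
    have "kv q (St t i) = kv R' (St t i)" using kv_mono[OF extd_co[OF exq] c(2)] .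
    then show ?thesis using c(1) by simp
  next
    case False
    have n: "i < nf R' t" using extd_nf[OF ex, of t] reach_step.prems(4) by simp
    have "cmdAt R' t i = cmdAt R t i" using extd_cmdAt[OF ex reach_step.prems(4)] .
    then have s: "is_store (cmdAt R' t i)" using reach_step.prems(5) by simp
    have ad: "addrOf R' t i = Some a" using addrOf_mono[OF reach_step.prems(6) ex reach_step.prems(4)] .
    have "kv R' (prp R' t a) < kv q (St t i)"
      using reach_step.IH[OF inv False reach_step.prems(3) n s ad] .
    moreover have "kv R (prp R t a) \<le> kv R' (prp R' t a)"
      using step_prp[OF reach_step.hyps(1) reach_step.prems(1)] .
    ultimately show ?thesis by simp
  qed
qed

lemma final_D: "final P q \<Longrightarrow> tid P t \<Longrightarrow>
     (\<forall>i<nf q t. i \<in> committed (rt q t)) \<and>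
     (\<forall>i' i. i' < i \<and> i < nf q t \<and> is_store (cmdAt q t i') \<and> is_load (cmdAt q t i) \<and>
        addrOf q t i' = addrOf q t i
        \<longrightarrow> kv q (St t i') \<le> kv q (the (lrd (rt q t) i)))"
  unfolding final_def by blast

lemma no_mix:
  assumes t: "tid P t" and il: "i < nf S t" and ld: "is_load (cmdAt S t i)" and ln: "lrd (rt S t) i = None"
    and ai: "addrOf S t i = Some a"
    and exs: "\<exists>j<i. is_store (cmdAt S t j) \<and> addrOf S t j \<in> {Some a, None}"
    and i': "i' = (GREATEST j. j < i \<and> is_store (cmdAt S t j) \<and> addrOf S t j \<in> {Some a, None})"
    and ai': "addrOf S t i' = Some a" and nc: "i' \<notin> committed (rt S t)"
    and inv: "Inv S" and r: "reach P (setL S t i (prp S t a)) \<sigma> q" and fq: "final P q"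
  shows False
proof -
  let ?S1 = "setL S t i (prp S t a)"
  have st: "pstep P S [EvLoad t i a] ?S1" using pstep.load_mem[OF t il ld ln ai] .
  have ex1: "extd S ?S1" and inv1: "Inv ?S1" using step_ext[OF st inv] by auto
  have exq: "extd ?S1 q" using reach_ext[OF r inv1] by blast
  have ex: "extd S q" using extd_trans[OF ex1 exq] .
  obtain j where "j<i \<and> is_store (cmdAt S t j) \<and> addrOf S t j \<in> {Some a, None}" using exs by blast
  then have g: "i' < i \<and> is_store (cmdAt S t i') \<and> addrOf S t i' \<in> {Some a, None}"
    unfolding i' by (rule GreatestI_nat[where b = i]) auto
  have i'n: "i' < nf S t" using g il by simp
  have cq: "cmdAt q t i' = cmdAt S t i'" "cmdAt q t i = cmdAt S t i"
    using extd_cmdAt[OF ex i'n] extd_cmdAt[OF ex il] by auto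
  have nq: "i < nf q t" using extd_nf[OF ex, of t] il by simp
  have aq: "addrOf q t i' = Some a" "addrOf q t i = Some a"
    using addrOf_mono[OF ai' ex i'n] addrOf_mono[OF ai ex il] by auto
  have l1: "lrd (rt ?S1 t) i = Some (prp S t a)" by (simp add: setL_def)
  have lq: "lrd (rt q t) i = Some (prp S t a)" using extd_lrd[OF exq l1] .
  have fin: "(\<forall>i<nf q t. i \<in> committed (rt q t))"
    "(\<forall>i' i. i' < i \<and> i < nf q t \<and> is_store (cmdAt q t i') \<and> is_load (cmdAt q t i) \<and>
        addrOf q t i' = addrOf q t i
        \<longrightarrow> kv q (St t i') \<le> kv q (the (lrd (rt q t) i)))" using final_D[OF fq t] by auto
  have le: "kv q (St t i') \<le> kv q (prp S t a)"
  proof -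
    have "i' < i \<and> i < nf q t \<and> is_store (cmdAt q t i') \<and> is_load (cmdAt q t i) \<and>
        addrOf q t i' = addrOf q t i" using g nq cq aq ld by simp
    then have "kv q (St t i') \<le> kv q (the (lrd (rt q t) i))" using fin(2) by blast
    then show ?thesis using lq by simp
  qed
  have cmq: "i' \<in> committed (rt q t)" using fin(1) g nq by auto
  have "key S (prp S t a) \<noteq> None" using inv unfolding Inv_def by blast
  then have kq: "kv q (prp S t a) = kv S (prp S t a)" using kv_mono[OF extd_co[OF ex]] by blast
  have nc1: "i' \<notin> committed (rt ?S1 t)" using nc by (simp add: setL_def)
  have n1: "i' < nf ?S1 t" using extd_nf[OF ex1, of t] i'n by simp
  have s1: "is_store (cmdAt ?S1 t i')" using extd_cmdAt[OF ex1 i'n] g by simp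
  have a1: "addrOf ?S1 t i' = Some a" using addrOf_mono[OF ai' ex1 i'n] .
  have "kv ?S1 (prp ?S1 t a) < kv q (St t i')"
    using reach_commit[OF r inv1 nc1 cmq n1 s1 a1] .
  moreover have "kv ?S1 (prp ?S1 t a) = kv S (prp S t a)" by (simp add: setL_def)
  ultimately show False using le kq by simp
qed

fun iscst :: "('q,'v,'r) event \<Rightarrow> bool" where
  "iscst (EvCommitSt _ _ _ _) = True" | "iscst _ = False"

lemma step_shape: "pstep P S e S' \<Longrightarrow> e \<noteq> [] \<and> length e = (if iscst (hd e) then 2 else 1)"
  by (induction rule: pstep.induct) auto

lemma seg: "pstep P S e S1 \<Longrightarrow> pstep P S' e' S2 \<Longrightarrow> e @ \<sigma> = e' @ \<sigma>' \<Longrightarrow> e = e' \<and> \<sigma> = \<sigma>'"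
proof -
  assume a: "pstep P S e S1" "pstep P S' e' S2" "e @ \<sigma> = e' @ \<sigma>'"
  have sh: "e \<noteq> [] \<and> length e = (if iscst (hd e) then 2 else 1)" "e' \<noteq> [] \<and> length e' = (if iscst (hd e') then 2 else 1)"
    using step_shape a(1,2) by blast+
  have "hd (e @ \<sigma>) = hd e" "hd (e' @ \<sigma>') = hd e'" using sh by auto
  then have "hd e = hd e'" using a(3) by simp
  then have "length e = length e'" using sh by simp
  then show ?thesis using a(3) by (simp add: append_eq_append_conv)
qed

lemma step_det:
  assumes s1: "pstep P S e S1" and s2: "pstep P S e S2" and inv: "Inv S"
    and r1: "reach P S1 \<sigma> q1" and f1: "final P q1" and r2: "reach P S2 \<sigma> q2" and f2: "final P q2"
  shows "S1 = S2"
  using s1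
proof cases
  case (fetch t ins)
  from s2 show ?thesis using fetch by cases auto
next
  case (load_mem t i a)
  from s2 show ?thesis
  proof cases
    case (load_mem t2 i2 a2)
    then show ?thesis using \<open>e = [EvLoad t i a]\<close> \<open>S1 = setL S t i (prp S t a)\<close> by simp
  next
    case (early_read t2 i2 a2 i')
    then have eq: "t2 = t" "i2 = i" "a2 = a" using \<open>e = [EvLoad t i a]\<close> by auto
    note h = early_read[unfolded eq]
    have r1': "reach P (setL S t i (prp S t a)) \<sigma> q1" using r1 \<open>S1 = setL S t i (prp S t a)\<close> by simp
    have False by (rule no_mix[OF h(3) h(4) h(5) h(6) h(7) h(8) h(9) h(10) h(12) inv r1' f1])
    then show ?thesis ..
  qed (use load_mem in auto)
next
  case (early_read t i a i')
  from s2 show ?thesis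
  proof cases
    case (load_mem t2 i2 a2)
    then have eq: "t2 = t" "i2 = i" "a2 = a" using \<open>e = [EvLoad t i a]\<close> by auto
    show ?thesis
      using no_mix[of P t i S a i' \<sigma> q2] early_read load_mem eq inv r2 f2 by blast
  next
    case (early_read t2 i2 a2 i2')
    then show ?thesis using \<open>e = [EvLoad t i a]\<close> \<open>S1 = setL S t i (St t i')\<close>
      \<open>i' = (GREATEST j. j < i \<and> is_store (cmdAt S t j) \<and> addrOf S t j \<in> {Some a, None})\<close> by simp
  qed (use early_read in auto)
next
  case (commit t i)
  from s2 show ?thesis using commit by cases auto
next
  case (commit_store t i a k)
  from s2 show ?thesis using commit_store by cases auto
next
  case (propagate t t' i' a k)
  from s2 show ?thesis using propagate by cases auto
qed

lemma main: "reach P S \<sigma> q1 \<Longrightarrow> Inv S \<Longrightarrow> final P q1 \<Longrightarrow> reach P S \<sigma> q2 \<Longrightarrow> final P q2 \<Longrightarrow> q1 = q2"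
proof (induction arbitrary: q2 rule: reach.induct)
  case (reach_refl S)
  from reach_refl.prems(3) show ?case by cases (auto dest: step_shape)
next
  case (reach_step S e S1 \<sigma> q1)
  from reach_step.prems(3) show ?case
  proof cases
    case (reach_step e' S2 \<sigma>')
    have eq: "e' = e \<and> \<sigma>' = \<sigma>" using seg[OF reach_step(2) \<open>pstep P S e S1\<close>] reach_step(1) by metis
    then have s2: "pstep P S e S2" and r2: "reach P S2 \<sigma> q2" using reach_step by auto
    have inv1: "Inv S1" using step_ext[OF \<open>pstep P S e S1\<close> \<open>Inv S\<close>] by blast
    have "S1 = S2" using step_det[OF \<open>pstep P S e S1\<close> s2 \<open>Inv S\<close> \<open>reach P S1 \<sigma> q1\<close> \<open>final P q1\<close> r2 \<open>final P q2\<close>] .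
    then show ?thesis using reach_step.IH[OF inv1 \<open>final P q1\<close>] r2 \<open>final P q2\<close> by simp
  next
    case reach_refl
    then show ?thesis using step_shape[OF \<open>pstep P S e S1\<close>] by simp
  qed
qed

theorem lemma1:
  fixes P :: "('q, 'v::{finite,zero}, 'r::finite) program"
    and \<sigma> :: "('q, 'v, 'r) event list"
  assumes "\<forall>T\<in>set P. finite (ttrans T)"
    and "reach P init_state \<sigma> q" and "final P q"
    and "reach P init_state \<sigma> q'" and "final P q'"
  shows "q = q'"
  using main[OF assms(2) Inv_init assms(3) assms(4) assms(5)] .

end
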